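(* Let $m \geq 1$ be an integer and define $F(m,p) = \mathbb{P}_{X\sim B(m,p)}[X \geq mp] = \sum_{j=\lceil mp\rceil}^{m} \binom{m}{j} p^j (1-p)^{m-j}$ for $p \in [0,1]$. Then for every $k \in \{1, \ldots, m\}$, the function $p \mapsto F(m,p)$ is strictly increasing on the interval $\left(\frac{k-1}{m}, \frac{k}{m}\right]$.
   Context: $B(m,p)$ denotes the binomial distribution with $m$ trials and success probability $p$: $\mathbb{P}[X=j]=\binom{m}{j}p^j(1-p)^{m-j}$ for $j=0,\dots,m$; its mean is $mp$. *)

theory Defs
  imports Complex_Main
begin

definition binomF :: "nat \<Rightarrow> real \<Rightarrow> real" where
  "binomF m p = (\<Sum>j = nat \<lceil>real m * p\<rceil>..m. real (m choose j) * p ^ j * (1 - p) ^ (m - j))"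

end

theory Submission
  imports Defs
begin

definition bb :: "nat \<Rightarrow> nat \<Rightarrow> real \<Rightarrow> real" where
  "bb n i x = real (n choose i) * x ^ i * (1 - x) ^ (n - i)"

lemma deriv_bb:
  assumes "i \<le> n"
  shows "((\<lambda>x. bb (Suc n) (Suc i) x) has_real_derivative
           real (Suc n) * (bb n i x - bb n (Suc i) x)) (at x)"
proof -
  have D: "((\<lambda>x. real (Suc n choose Suc i) * x ^ Suc i * (1 - x) ^ (n - i)) has_real_derivative
      real (Suc n choose Suc i) * (real (Suc i) * x ^ i * (1 - x) ^ (n - i)
        - x ^ Suc i * (real (n - i) * (1 - x) ^ (n - i - 1)))) (at x)"
    by (auto intro!: derivative_eq_intros simp: algebra_simps) (cases i; simp add: algebra_simps)
  have c1: "real (Suc n choose Suc i) * real (Suc i) = real (Suc n) * real (n choose i)"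
    using Suc_times_binomial_eq[of n i] by (metis of_nat_mult)
  have c2: "real (Suc n choose Suc i) * real (n - i) = real (Suc n) * real (n choose Suc i)"
    using binomial_absorb_comp[of "Suc n" "Suc i"] by (metis diff_Suc_1 diff_Suc_Suc mult.commute of_nat_mult)
  have e: "real (Suc n choose Suc i) * (real (Suc i) * x ^ i * (1 - x) ^ (n - i)
        - x ^ Suc i * (real (n - i) * (1 - x) ^ (n - i - 1)))
      = real (Suc n) * (bb n i x - bb n (Suc i) x)"
  proof -
    have "real (Suc n choose Suc i) * (real (Suc i) * x ^ i * (1 - x) ^ (n - i)
        - x ^ Suc i * (real (n - i) * (1 - x) ^ (n - i - 1)))
      = (real (Suc n choose Suc i) * real (Suc i)) * x ^ i * (1 - x) ^ (n - i)
        - (real (Suc n choose Suc i) * real (n - i)) * x ^ Suc i * (1 - x) ^ (n - Suc i)"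
      by (simp add: algebra_simps)
    also have "\<dots> = real (Suc n) * (bb n i x - bb n (Suc i) x)"
      unfolding c1 c2 bb_def by (simp add: algebra_simps)
    finally show ?thesis .
  qed
  show ?thesis using D unfolding e bb_def by simp
qed

definition GG :: "nat \<Rightarrow> nat \<Rightarrow> real \<Rightarrow> real" where
  "GG m k p = (\<Sum>j = k..m. bb m j p)"

lemma telesc:
  assumes "Suc i \<le> N"
  shows "(\<Sum>j = Suc i..N. (f (j - 1) - f j)) = f i - (f N :: real)"
  using assms
proof (induction N rule: dec_induct)
  case base then show ?case by simp
next
  case (step N)
  have "{Suc i..Suc N} = insert (Suc N) {Suc i..N}" using step by auto
  then show ?case using step by simp
qed

lemma deriv_GG:
  assumes "i \<le> n"
  shows "((\<lambda>x. GG (Suc n) (Suc i) x) has_real_derivative real (Suc n) * bb n i x) (at x)"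
proof -
  have "((\<lambda>x. \<Sum>j \<in> {Suc i..Suc n}. bb (Suc n) j x) has_real_derivative
      (\<Sum>j \<in> {Suc i..Suc n}. real (Suc n) * (bb n (j - 1) x - bb n j x))) (at x)"
  proof (rule DERIV_sum)
    fix j assume j: "j \<in> {Suc i..Suc n}"
    then obtain l where l: "j = Suc l" "l \<le> n" by (cases j) auto
    show "((\<lambda>x. bb (Suc n) j x) has_real_derivative real (Suc n) * (bb n (j - 1) x - bb n j x)) (at x)"
      using deriv_bb[OF l(2), of x] l by simp
  qed
  moreover have "(\<Sum>j \<in> {Suc i..Suc n}. real (Suc n) * (bb n (j - 1) x - bb n j x))
      = real (Suc n) * (bb n i x - bb n (Suc n) x)"
  proof -
    have "(\<Sum>j \<in> {Suc i..Suc n}. real (Suc n) * (bb n (j - 1) x - bb n j x))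
       = real (Suc n) * (\<Sum>j \<in> {Suc i..Suc n}. (bb n (j - 1) x - bb n j x))"
      by (rule sum_distrib_left[symmetric])
    also have "(\<Sum>j \<in> {Suc i..Suc n}. (bb n (j - 1) x - bb n j x)) = bb n i x - bb n (Suc n) x"
      using telesc[of i "Suc n" "\<lambda>j. bb n j x"] assms by simp
    finally show ?thesis .
  qed
  moreover have "bb n (Suc n) x = 0" by (simp add: bb_def)
  ultimately show ?thesis unfolding GG_def by simp
qed

theorem mainTheorem3:
  fixes m k :: nat
  assumes "m \<ge> 1" and "1 \<le> k" and "k \<le> m"
  shows "strict_mono_on {(real k - 1) / real m <.. real k / real m} (\<lambda>p. binomF m p)"
proof -
  obtain n where n: "m = Suc n" using assms by (cases m) auto
  obtain i where i: "k = Suc i" using assms by (cases k) auto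
  have iN: "i \<le> n" using assms n i by simp
  have mpos: "real m > 0" using assms by simp
  have eqF: "binomF m p = GG m k p" if p: "p \<in> {(real k - 1) / real m <.. real k / real m}" for p
  proof -
    have "real k - 1 < real m * p" "real m * p \<le> real k"
      using p mpos by (auto simp: field_simps)
    then have "\<lceil>real m * p\<rceil> = int k" by (simp add: ceiling_eq_iff)
    then show ?thesis unfolding binomF_def GG_def bb_def by simp
  qed
  show ?thesis
  proof (rule strict_mono_onI)
    fix p q assume p: "p \<in> {(real k - 1) / real m <.. real k / real m}"
      and q: "q \<in> {(real k - 1) / real m <.. real k / real m}" and pq: "p < q"
    have "real i < p * real m" using p mpos i by (auto simp: field_simps)
    then have "0 < p * real m" by linarith
    then have p0: "p > 0" using mpos by (simp add: zero_less_mult_iff)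
    have "q * real m \<le> real k" using q mpos by (auto simp: field_simps)
    also have "\<dots> \<le> 1 * real m" using assms by simp
    finally have q1: "q \<le> 1" using mpos by (simp add: mult_le_cancel_right)
    obtain z where z: "p < z" "z < q" "GG m k q - GG m k p = (q - p) * (real m * bb n i z)"
      using MVT2[OF pq, of "GG m k" "\<lambda>x. real m * bb n i x"] deriv_GG[OF iN] n i by auto
    have "bb n i z > 0" using z p0 q1 unfolding bb_def
      by (intro mult_pos_pos) (auto simp: iN)
    then have "GG m k q - GG m k p > 0" using z pq mpos by simp
    then show "binomF m p < binomF m q" using eqF[OF p] eqF[OF q] by simp
  qed
qed

end
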